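(* Let $P$ be a finitely generated abelian group and $A\subset P$ a subgroup. For subgroups $B,B'$ with $A\subset B\subset P$ and $A\subset B'\subset P$, say that $B$ and $B'$ are equivalent if there is an isomorphism $B\to B'$ which restricts to the identity on $A$. Then there are only finitely many equivalence classes. *)

theory Defs
  imports "HOL-Algebra.Algebra"
begin

definition fin_gen_group :: "('a, 'b) monoid_scheme \<Rightarrow> bool" where
  "fin_gen_group P \<longleftrightarrow> (\<exists>S. finite S \<and> S \<subseteq> carrier P \<and> generate P S = carrier P)"

definition intermediate_subgroups :: "('a, 'b) monoid_scheme \<Rightarrow> 'a set \<Rightarrow> 'a set set" where
  "intermediate_subgroups P A = {B. subgroup B P \<and> A \<subseteq> B}"

definition rel_equiv :: "('a, 'b) monoid_scheme \<Rightarrow> 'a set \<Rightarrow> 'a set \<Rightarrow> 'a set \<Rightarrow> bool" where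
  "rel_equiv P A B B' \<longleftrightarrow>
     (\<exists>f \<in> iso (P\<lparr>carrier := B\<rparr>) (P\<lparr>carrier := B'\<rparr>). \<forall>a\<in>A. f a = a)"

definition rel_equiv_rel :: "('a, 'b) monoid_scheme \<Rightarrow> 'a set \<Rightarrow> ('a set \<times> 'a set) set" where
  "rel_equiv_rel P A = {(B, B'). B \<in> intermediate_subgroups P A \<and> B' \<in> intermediate_subgroups P A
                                 \<and> rel_equiv P A B B'}"

end

theory Submission
  imports Defs
begin


definition ext :: "('a, 'b) monoid_scheme \<Rightarrow> 'a set \<Rightarrow> 'a \<Rightarrow> 'a set" where
  "ext G H g = {h \<otimes>\<^bsub>G\<^esub> g [^]\<^bsub>G\<^esub> (a::int) | h a. h \<in> H}"

fun lin :: "('a, 'b) monoid_scheme \<Rightarrow> 'a set \<Rightarrow> 'a list \<Rightarrow> 'a set" where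
  "lin G H [] = H"
| "lin G H (g # gs) = ext G (lin G H gs) g"

definition sat :: "('a, 'b) monoid_scheme \<Rightarrow> 'a set \<Rightarrow> 'a set \<Rightarrow> 'a set" where
  "sat G B H = {x \<in> B. \<exists>m::nat. m > 0 \<and> x [^]\<^bsub>G\<^esub> m \<in> H}"

definition indep :: "('a, 'b) monoid_scheme \<Rightarrow> 'a set \<Rightarrow> 'a \<Rightarrow> bool" where
  "indep G H g \<longleftrightarrow> (\<forall>a::int. g [^]\<^bsub>G\<^esub> a \<in> H \<longrightarrow> a = 0)"

inductive chain :: "('a, 'b) monoid_scheme \<Rightarrow> 'a set \<Rightarrow> nat \<Rightarrow> 'a set \<Rightarrow> bool"
  for G C where
  base: "subgroup C G \<Longrightarrow> chain G C 0 C"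
| step: "chain G C n H \<Longrightarrow> g \<in> carrier G \<Longrightarrow> indep G H g \<Longrightarrow> chain G C (Suc n) (ext G H g)"

context comm_group
begin

lemma sub_nat_pow: "subgroup H G \<Longrightarrow> h \<in> H \<Longrightarrow> h [^] (k::nat) \<in> H"
  by (metis int_pow_int subgroup_int_pow_closed)

lemma ext_subgroup:
  assumes H: "subgroup H G" and g: "g \<in> carrier G"
  shows "subgroup (ext G H g) G"
proof -
  interpret H: subgroup H G by fact
  show ?thesis
  proof
    show "ext G H g \<subseteq> carrier G" using g by (auto simp: ext_def)
    show "\<one> \<in> ext G H g" unfolding ext_def
      by (rule CollectI, rule exI[of _ "\<one>"], rule exI[of _ 0]) (use g in simp)
  next
    fix x y assume "x \<in> ext G H g" "y \<in> ext G H g"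
    then obtain h1 a1 h2 a2 where x: "x = h1 \<otimes> g [^] (a1::int)" "h1 \<in> H"
      and y: "y = h2 \<otimes> g [^] (a2::int)" "h2 \<in> H" by (auto simp: ext_def)
    have "x \<otimes> y = (h1 \<otimes> h2) \<otimes> g [^] (a1 + a2)"
      using x y g by (simp add: int_pow_mult m_ac)
    then show "x \<otimes> y \<in> ext G H g" using x y by (auto simp: ext_def)
  next
    fix x assume "x \<in> ext G H g"
    then obtain h1 a1 where x: "x = h1 \<otimes> g [^] (a1::int)" "h1 \<in> H" by (auto simp: ext_def)
    have "inv x = inv h1 \<otimes> g [^] (- a1)"
      using x g by (simp add: inv_mult int_pow_neg)
    then show "inv x \<in> ext G H g" using x by (auto simp: ext_def)
  qed
qed

lemma ext_sub: "subgroup H G \<Longrightarrow> g \<in> carrier G \<Longrightarrow> H \<subseteq> ext G H g"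
proof
  fix x assume "subgroup H G" "g \<in> carrier G" "x \<in> H"
  then have "x = x \<otimes> g [^] (0::int) \<and> x \<in> H" by (simp add: subgroup.mem_carrier)
  then show "x \<in> ext G H g" unfolding ext_def by blast
qed

lemma ext_gen: "subgroup H G \<Longrightarrow> g \<in> carrier G \<Longrightarrow> g \<in> ext G H g"
proof -
  assume "subgroup H G" "g \<in> carrier G"
  then have "g = \<one> \<otimes> g [^] (1::int) \<and> \<one> \<in> H" by (simp add: subgroup.one_closed)
  then show "g \<in> ext G H g" unfolding ext_def by blast
qed

lemma ext_le: "subgroup K G \<Longrightarrow> H \<subseteq> K \<Longrightarrow> g \<in> K \<Longrightarrow> ext G H g \<subseteq> K"
  unfolding ext_def by (auto intro: subgroup_int_pow_closed subgroup.m_closed)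

lemma ext_mono: "H \<subseteq> K \<Longrightarrow> ext G H g \<subseteq> ext G K g"
  unfolding ext_def by blast

lemma lin_subgroup: "subgroup H G \<Longrightarrow> set gs \<subseteq> carrier G \<Longrightarrow> subgroup (lin G H gs) G"
  by (induction gs) (auto intro: ext_subgroup)

lemma lin_sub: "subgroup H G \<Longrightarrow> set gs \<subseteq> carrier G \<Longrightarrow> H \<subseteq> lin G H gs"
  by (induction gs) (auto dest: ext_sub[OF lin_subgroup])

lemma lin_gens: "subgroup H G \<Longrightarrow> set gs \<subseteq> carrier G \<Longrightarrow> set gs \<subseteq> lin G H gs"
proof (induction gs)
  case (Cons g gs)
  then show ?case using ext_gen[OF lin_subgroup, of H gs g] ext_sub[OF lin_subgroup, of H gs g] by auto
qed simp

lemma lin_le: "subgroup K G \<Longrightarrow> H \<subseteq> K \<Longrightarrow> set gs \<subseteq> K \<Longrightarrow> lin G H gs \<subseteq> K"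
proof (induction gs)
  case (Cons g gs)
  then show ?case using ext_le[of K "lin G H gs" g] by simp
qed simp

lemma lin_mono: "H \<subseteq> K \<Longrightarrow> lin G H gs \<subseteq> lin G K gs"
  by (induction gs) (auto intro: ext_mono[THEN subsetD])

lemma sat_subgroup:
  assumes B: "subgroup B G" and K: "subgroup K G"
  shows "subgroup (sat G B K) G"
proof -
  interpret B: subgroup B G by fact
  interpret K: subgroup K G by fact
  show ?thesis
  proof
    show "sat G B K \<subseteq> carrier G" by (auto simp: sat_def)
    show "\<one> \<in> sat G B K" by (auto simp: sat_def intro: exI[of _ 1])
  next
    fix x y assume "x \<in> sat G B K" "y \<in> sat G B K"
    then obtain m n :: nat where x: "x \<in> B" "m > 0" "x [^] m \<in> K" and y: "y \<in> B" "n > 0" "y [^] n \<in> K"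
      unfolding sat_def by blast
    have xc: "x \<in> carrier G" "y \<in> carrier G" using x y by auto
    have "(x \<otimes> y) [^] (m * n) = (x [^] m) [^] n \<otimes> (y [^] n) [^] m"
      using xc by (simp add: nat_pow_distrib nat_pow_pow mult.commute)
    also have "\<dots> \<in> K" using x y by (auto intro: sub_nat_pow[OF K])
    finally show "x \<otimes> y \<in> sat G B K" using x y by (auto simp: sat_def intro!: exI[of _ "m*n"])
  next
    fix x assume "x \<in> sat G B K"
    then obtain m :: nat where x: "x \<in> B" "m > 0" "x [^] m \<in> K" by (auto simp: sat_def)
    have "inv x [^] m = inv (x [^] m)" using x by (simp add: nat_pow_inv)
    then show "inv x \<in> sat G B K" using x by (auto simp: sat_def)
  qed
qed

lemma sat_saturated:
  assumes K: "subgroup K G" and x: "x \<in> B" and m: "m > 0" and xm: "x [^] (m::nat) \<in> sat G B K"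
    and Bc: "B \<subseteq> carrier G"
  shows "x \<in> sat G B K"
proof -
  obtain n :: nat where n: "n > 0" "(x [^] m) [^] n \<in> K" using xm unfolding sat_def by blast
  have "(x [^] m) [^] n = x [^] (m * n)" using x Bc by (simp add: nat_pow_pow subsetD)
  then show ?thesis using n m x by (auto simp: sat_def intro!: exI[of _ "m*n"])
qed

end


lemma int_ideal:
  fixes I :: "int set"
  assumes add: "\<And>a b. a \<in> I \<Longrightarrow> b \<in> I \<Longrightarrow> a + b \<in> I"
    and mul: "\<And>a z. a \<in> I \<Longrightarrow> z * a \<in> I"
    and M: "M \<in> I" "M \<noteq> 0"
  shows "\<exists>d>0. d \<in> I \<and> (\<forall>a\<in>I. \<exists>q. a = q * d)"
proof -
  have "sgn M * M \<in> I" using mul M by blast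
  moreover have "sgn M * M = \<bar>M\<bar>" by (simp add: abs_sgn mult.commute)
  ultimately have absM: "int (nat \<bar>M\<bar>) \<in> I" by simp
  define P where "P n \<longleftrightarrow> n > 0 \<and> int n \<in> I" for n
  have "P (nat \<bar>M\<bar>)" using absM M by (simp add: P_def)
  then have Pd: "P (LEAST n. P n)" by (rule LeastI)
  define d where "d = int (LEAST n. P n)"
  have d: "d > 0" "d \<in> I" using Pd by (auto simp: P_def d_def)
  have "\<exists>q. a = q * d" if a: "a \<in> I" for a
  proof -
    have "a + (- (a div d)) * d \<in> I" using add[OF a mul[OF d(2)]] .
    moreover have "a + (- (a div d)) * d = a mod d" by (simp add: minus_div_mult_eq_mod[symmetric])
    ultimately have mi: "a mod d \<in> I" by simp
    have "a mod d = 0"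
    proof (rule ccontr)
      assume nz: "a mod d \<noteq> 0"
      have "a mod d \<ge> 0" "a mod d < d" using d by auto
      then have "P (nat (a mod d))" using nz mi by (auto simp: P_def)
      then have "(LEAST n. P n) \<le> nat (a mod d)" by (rule Least_le)
      then have "int (LEAST n. P n) \<le> int (nat (a mod d))" by (simp only: of_nat_le_iff)
      also have "int (nat (a mod d)) = a mod d" using \<open>a mod d \<ge> 0\<close> by simp
      finally have "int (LEAST n. P n) \<le> a mod d" .
      then show False using \<open>a mod d < d\<close> \<open>a mod d \<ge> 0\<close> d_def by simp
    qed
    then show ?thesis by (metis mult.commute dvd_def dvd_eq_mod_eq_0)
  qed
  then show ?thesis using d by blast
qed

context comm_group
begin

lemma pow_prod: "x \<in> carrier G \<Longrightarrow> y \<in> carrier G \<Longrightarrow> (x \<otimes> y [^] (a::int)) [^] (z::int) = x [^] z \<otimes> y [^] (a * z)"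
  by (simp add: int_pow_distrib int_pow_pow)

lemma uniq_decomp:
  assumes H: "subgroup H G" and g: "g \<in> carrier G" and ind: "indep G H g"
    and h: "h1 \<in> H" "h2 \<in> H" and eq: "h1 \<otimes> g [^] (a1::int) = h2 \<otimes> g [^] (a2::int)"
  shows "a1 = a2 \<and> h1 = h2"
proof -
  interpret H: subgroup H G by fact
  have hc: "h1 \<in> carrier G" "h2 \<in> carrier G" using h by auto
  have "g [^] (a1 - a2) = inv h1 \<otimes> h2"
  proof -
    have "g [^] (a1 - a2) = g [^] a1 \<otimes> inv (g [^] a2)" using g by (simp add: int_pow_diff)
    also have "g [^] a1 = inv h1 \<otimes> (h2 \<otimes> g [^] a2)"
      using eq hc g by (metis inv_solve_left int_pow_closed m_closed)
    finally show ?thesis using hc g by (simp add: m_assoc)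
  qed
  also have "\<dots> \<in> H" using h by auto
  finally have "a1 - a2 = 0" using ind by (auto simp: indep_def)
  then have "a1 = a2" by simp
  with eq hc g show ?thesis by (metis int_pow_closed r_cancel)
qed

lemma ext_memE:
  assumes "x \<in> ext G H g" obtains h a where "h \<in> H" "x = h \<otimes> g [^] (a::int)"
  using assms unfolding ext_def by blast

lemma ext_memI:
  "h \<in> H \<Longrightarrow> h \<otimes> g [^] (a::int) \<in> ext G H g"
  unfolding ext_def by blast

lemma fg_sub:
  "set gs \<subseteq> carrier G \<Longrightarrow> subgroup B G \<Longrightarrow> B \<subseteq> lin G {\<one>} gs \<Longrightarrow>
   \<exists>bs. set bs \<subseteq> B \<and> length bs \<le> length gs \<and> B = lin G {\<one>} bs"
proof (induction gs arbitrary: B)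
  case Nil
  then have "B = {\<one>}" using subgroup.one_closed[OF Nil(2)] by auto
  then show ?case by (intro exI[of _ "[]"]) auto
next
  case (Cons g hs)
  define L where "L = lin G {\<one>} hs"
  have g: "g \<in> carrier G" and hs: "set hs \<subseteq> carrier G" using Cons.prems by auto
  have L: "subgroup L G" unfolding L_def by (rule lin_subgroup[OF triv_subgroup hs])
  interpret B: subgroup B G by fact
  interpret L: subgroup L G by fact
  have B0: "subgroup (B \<inter> L) G" by (rule subgroups_Inter_pair) (fact, fact)
  obtain bs0 where bs0: "set bs0 \<subseteq> B \<inter> L" "length bs0 \<le> length hs" "B \<inter> L = lin G {\<one>} bs0"
    using Cons.IH[OF hs B0] L_def by auto
  have Bsub: "B \<subseteq> ext G L g" using Cons.prems(3) L_def by simp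
  define I where "I = {a. \<exists>y\<in>L. y \<otimes> g [^] (a::int) \<in> B}"
  have Iiff: "a \<in> I \<longleftrightarrow> (\<exists>y\<in>L. y \<otimes> g [^] a \<in> B)" for a by (simp add: I_def)
  show ?case
  proof (cases "\<exists>M\<in>I. M \<noteq> 0")
    case False
    have "B \<subseteq> B \<inter> L"
    proof
      fix x assume x: "x \<in> B"
      then obtain y a where y: "y \<in> L" "x = y \<otimes> g [^] (a::int)" using Bsub by (blast elim: ext_memE)
      then have "a \<in> I" using x by (auto simp: I_def)
      then have "a = 0" using False by auto
      then show "x \<in> B \<inter> L" using x y by simp
    qed
    then have "B = B \<inter> L" by blast
    then show ?thesis using bs0 by (intro exI[of _ bs0]) auto
  next
    case True
    then obtain M where M: "M \<in> I" "M \<noteq> 0" by blast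
    have addI: "a + b \<in> I" if aI: "a \<in> I" and bI: "b \<in> I" for a b
    proof -
      obtain y1 where y1: "y1 \<in> L" "y1 \<otimes> g [^] a \<in> B" using Iiff[THEN iffD1, OF aI] by blast
      obtain y2 where y2: "y2 \<in> L" "y2 \<otimes> g [^] b \<in> B" using Iiff[THEN iffD1, OF bI] by blast
      note y = y1 y2
      have "(y1 \<otimes> g [^] a) \<otimes> (y2 \<otimes> g [^] b) = (y1 \<otimes> y2) \<otimes> g [^] (a + b)"
        using y g by (simp add: int_pow_mult m_ac)
      then have "(y1 \<otimes> y2) \<otimes> g [^] (a + b) \<in> B" using y by (metis B.m_closed)
      then show ?thesis using y by (auto simp: I_def)
    qed
    have mulI: "z * a \<in> I" if aI: "a \<in> I" for a z
    proof -
      obtain y where y: "y \<in> L" "y \<otimes> g [^] a \<in> B" using Iiff[THEN iffD1, OF aI] by blast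
      have "(y \<otimes> g [^] a) [^] z = y [^] z \<otimes> g [^] (z * a)"
        using y g by (simp add: pow_prod mult.commute)
      moreover have "(y \<otimes> g [^] a) [^] z \<in> B" using y by (simp add: subgroup_int_pow_closed[OF Cons.prems(2)])
      moreover have "y [^] z \<in> L" using y by (simp add: subgroup_int_pow_closed[OF L])
      ultimately show ?thesis by (auto simp: I_def)
    qed
    obtain d where d: "d > 0" "d \<in> I" "\<forall>a\<in>I. \<exists>q. a = q * d"
      using int_ideal[OF addI mulI M] by blast
    obtain y0 where y0: "y0 \<in> L" "y0 \<otimes> g [^] d \<in> B" using d by (auto simp: I_def)
    define b where "b = y0 \<otimes> g [^] d"
    have b: "b \<in> B" using y0 b_def by simp
    have "B \<subseteq> ext G (B \<inter> L) b"
    proof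
      fix x assume x: "x \<in> B"
      then obtain y a where y: "y \<in> L" "x = y \<otimes> g [^] (a::int)" using Bsub by (blast elim: ext_memE)
      then have "a \<in> I" using x by (auto simp: I_def)
      then obtain q where q: "a = q * d" using d by blast
      have yc: "y \<in> carrier G" "y0 \<in> carrier G" using y y0 by auto
      have bq: "b [^] (- q) = y0 [^] (- q) \<otimes> g [^] (- (q * d))"
        using yc g by (simp add: b_def pow_prod mult.commute)
      have gg: "g [^] (q * d) \<otimes> g [^] (- (q * d)) = \<one>"
        using g by (simp add: int_pow_mult[symmetric])
      have "x \<otimes> b [^] (- q) = (y \<otimes> y0 [^] (- q)) \<otimes> (g [^] (q * d) \<otimes> g [^] (- (q * d)))"
        using yc g by (simp add: y q bq m_ac)
      also have "\<dots> = y \<otimes> y0 [^] (- q)" using gg yc by simp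
      finally have "x \<otimes> b [^] (- q) = y \<otimes> y0 [^] (- q)" .
      moreover have "x \<otimes> b [^] (- q) \<in> B" using x b by (simp add: subgroup_int_pow_closed[OF Cons.prems(2)])
      moreover have "y \<otimes> y0 [^] (- q) \<in> L" using y y0 by (simp add: subgroup_int_pow_closed[OF L])
      ultimately have x': "x \<otimes> b [^] (- q) \<in> B \<inter> L" by simp
      have "x = (x \<otimes> b [^] (- q)) \<otimes> b [^] q"
        using x b by (simp add: m_assoc int_pow_neg)
      then show "x \<in> ext G (B \<inter> L) b" using x' by (metis ext_memI)
    qed
    moreover have "ext G (B \<inter> L) b \<subseteq> B" by (rule ext_le[OF Cons.prems(2)]) (use b in auto)
    ultimately have "B = lin G {\<one>} (b # bs0)" using bs0 by auto
    then show ?thesis using bs0 b by (intro exI[of _ "b # bs0"]) auto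
  qed
qed

end


context comm_group
begin

lemma tors_fin:
  "subgroup A G \<Longrightarrow> set hs \<subseteq> carrier G \<Longrightarrow> (\<forall>h\<in>set hs. \<exists>m::nat. m > 0 \<and> h [^] m \<in> A) \<Longrightarrow>
   \<exists>R. finite R \<and> R \<subseteq> carrier G \<and> (\<forall>x\<in>lin G A hs. \<exists>r\<in>R. \<exists>a\<in>A. x = a \<otimes> r)"
proof (induction hs)
  case Nil
  show ?case
  proof (intro exI[of _ "{\<one>}"] conjI ballI)
    fix x assume "x \<in> lin G A []"
    then have "x \<in> A" by simp
    then have "x = x \<otimes> \<one>" using Nil(1) by (simp add: subgroup.mem_carrier)
    then show "\<exists>r\<in>{\<one>}. \<exists>a\<in>A. x = a \<otimes> r" using \<open>x \<in> A\<close> by blast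
  qed auto
next
  case (Cons h hs)
  have h: "h \<in> carrier G" and hs: "set hs \<subseteq> carrier G" using Cons.prems by auto
  obtain R where R: "finite R" "R \<subseteq> carrier G" "\<forall>x\<in>lin G A hs. \<exists>r\<in>R. \<exists>a\<in>A. x = a \<otimes> r"
    using Cons by auto
  obtain m :: nat where m: "m > 0" "h [^] m \<in> A" using Cons.prems(3) by auto
  define R' where "R' = (\<lambda>(r, k). r \<otimes> h [^] (int k)) ` (R \<times> {..<m})"
  show ?case
  proof (intro exI[of _ R'] conjI ballI)
    show "finite R'" using R by (simp add: R'_def)
    show "R' \<subseteq> carrier G" using R h by (auto simp: R'_def)
  next
    fix x assume "x \<in> lin G A (h # hs)"
    then obtain y a where y: "y \<in> lin G A hs" "x = y \<otimes> h [^] (a::int)" by (auto elim: ext_memE)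
    obtain r a0 where r: "r \<in> R" "a0 \<in> A" "y = a0 \<otimes> r" using R y by blast
    have a0c: "a0 \<in> carrier G" using r Cons.prems(1) by (simp add: subgroup.mem_carrier)
    have rc: "r \<in> carrier G" using r R by auto
    define q where "q = a div int m"
    define k where "k = nat (a mod int m)"
    have k: "int k = a mod int m" "k < m" using m by (auto simp: k_def nat_less_iff)
    have "a = int m * q + int k" using k by (simp add: q_def)
    then have "h [^] a = (h [^] (int m)) [^] q \<otimes> h [^] (int k)"
      using h by (simp add: int_pow_mult int_pow_pow)
    also have "h [^] (int m) = h [^] m" by (simp add: int_pow_int)
    finally have ha: "h [^] a = (h [^] m) [^] q \<otimes> h [^] (int k)" .
    have "x = (a0 \<otimes> (h [^] m) [^] q) \<otimes> (r \<otimes> h [^] (int k))"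
      using a0c rc h by (simp add: y r ha m_ac)
    moreover have "a0 \<otimes> (h [^] m) [^] q \<in> A"
      using r m Cons.prems(1) by (simp add: subgroup.m_closed subgroup_int_pow_closed)
    moreover have "r \<otimes> h [^] (int k) \<in> R'" using r k by (force simp: R'_def)
    ultimately show "\<exists>r\<in>R'. \<exists>a\<in>A. x = a \<otimes> r" by blast
  qed
qed

lemma chain_sub: "chain G C n H \<Longrightarrow> subgroup H G \<and> C \<subseteq> H"
  by (induction rule: chain.induct) (auto intro: ext_subgroup dest: ext_sub)

end


context comm_group
begin

lemma iso_subE:
  assumes "\<phi> \<in> iso (G\<lparr>carrier := H\<rparr>) (G\<lparr>carrier := H'\<rparr>)"
  shows "\<And>x. x \<in> H \<Longrightarrow> \<phi> x \<in> H'" "\<And>x y. x \<in> H \<Longrightarrow> y \<in> H \<Longrightarrow> \<phi> (x \<otimes> y) = \<phi> x \<otimes> \<phi> y"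
    "inj_on \<phi> H" "\<phi> ` H = H'"
  using assms by (auto simp: iso_iff hom_def)

lemma ext_iso:
  assumes H: "subgroup H G" and H': "subgroup H' G" and g: "g \<in> carrier G" and g': "g' \<in> carrier G"
    and ind: "indep G H g" and ind': "indep G H' g'"
    and phi: "\<phi> \<in> iso (G\<lparr>carrier := H\<rparr>) (G\<lparr>carrier := H'\<rparr>)"
  shows "\<exists>\<psi>. \<psi> \<in> iso (G\<lparr>carrier := ext G H g\<rparr>) (G\<lparr>carrier := ext G H' g'\<rparr>) \<and> (\<forall>h\<in>H. \<psi> h = \<phi> h)"
proof -
  interpret H: subgroup H G by fact
  interpret H': subgroup H' G by fact
  note ph = iso_subE[OF phi]
  define hp where "hp x = (THE h. h \<in> H \<and> (\<exists>a::int. x = h \<otimes> g [^] a))" for x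
  define ap where "ap x = (THE a::int. \<exists>h\<in>H. x = h \<otimes> g [^] a)" for x
  define \<psi> where "\<psi> x = \<phi> (hp x) \<otimes> g' [^] (ap x)" for x
  have psi: "\<psi> (h \<otimes> g [^] a) = \<phi> h \<otimes> g' [^] a" if h: "h \<in> H" for h and a :: int
  proof -
    have "hp (h \<otimes> g [^] a) = h" unfolding hp_def
    proof (rule the_equality)
      show "h \<in> H \<and> (\<exists>a'::int. h \<otimes> g [^] a = h \<otimes> g [^] a')" using h by blast
      fix h' assume "h' \<in> H \<and> (\<exists>a'::int. h \<otimes> g [^] a = h' \<otimes> g [^] a')"
      then obtain a' where "h' \<in> H" "h \<otimes> g [^] a = h' \<otimes> g [^] (a'::int)" by blast
      then show "h' = h" using uniq_decomp[OF H g ind h] by metis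
    qed
    moreover have "ap (h \<otimes> g [^] a) = a" unfolding ap_def
    proof (rule the_equality)
      show "\<exists>h'\<in>H. h \<otimes> g [^] a = h' \<otimes> g [^] a" using h by blast
      fix a' assume "\<exists>h'\<in>H. h \<otimes> g [^] a = h' \<otimes> g [^] (a'::int)"
      then obtain h' where "h' \<in> H" "h \<otimes> g [^] a = h' \<otimes> g [^] (a'::int)" by blast
      then show "a' = a" using uniq_decomp[OF H g ind h] by metis
    qed
    ultimately show ?thesis by (simp add: \<psi>_def)
  qed
  have "\<psi> \<in> iso (G\<lparr>carrier := ext G H g\<rparr>) (G\<lparr>carrier := ext G H' g'\<rparr>)"
    unfolding iso_iff
  proof (intro conjI)
    show "\<psi> \<in> hom (G\<lparr>carrier := ext G H g\<rparr>) (G\<lparr>carrier := ext G H' g'\<rparr>)"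
      unfolding hom_def
    proof (simp, intro conjI ballI)
      show "\<psi> \<in> ext G H g \<rightarrow> ext G H' g'"
      proof
        fix x assume "x \<in> ext G H g"
        then obtain h a where "h \<in> H" "x = h \<otimes> g [^] (a::int)" by (rule ext_memE)
        then show "\<psi> x \<in> ext G H' g'" using psi ph(1) by (simp add: ext_memI)
      qed
    next
      fix x y assume "x \<in> ext G H g" "y \<in> ext G H g"
      obtain h1 a1 where x: "h1 \<in> H" "x = h1 \<otimes> g [^] (a1::int)" using \<open>x \<in> ext G H g\<close> by (rule ext_memE)
      obtain h2 a2 where y: "h2 \<in> H" "y = h2 \<otimes> g [^] (a2::int)" using \<open>y \<in> ext G H g\<close> by (rule ext_memE)
      have hc: "h1 \<in> carrier G" "h2 \<in> carrier G" "\<phi> h1 \<in> carrier G" "\<phi> h2 \<in> carrier G"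
        using x y ph(1) by auto
      have "x \<otimes> y = (h1 \<otimes> h2) \<otimes> g [^] (a1 + a2)" using x y hc g by (simp add: int_pow_mult m_ac)
      then have "\<psi> (x \<otimes> y) = \<phi> (h1 \<otimes> h2) \<otimes> g' [^] (a1 + a2)" using x y by (simp add: psi)
      also have "\<dots> = (\<phi> h1 \<otimes> g' [^] a1) \<otimes> (\<phi> h2 \<otimes> g' [^] a2)"
        using x y hc g' ph(2) by (simp add: int_pow_mult m_ac)
      also have "\<dots> = \<psi> x \<otimes> \<psi> y" using x y by (simp add: psi)
      finally show "\<psi> (x \<otimes> y) = \<psi> x \<otimes> \<psi> y" .
    qed
  next
    show "\<psi> ` carrier (G\<lparr>carrier := ext G H g\<rparr>) = carrier (G\<lparr>carrier := ext G H' g'\<rparr>)"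
    proof (simp, intro equalityI subsetI)
      fix y assume "y \<in> \<psi> ` ext G H g"
      then obtain x where x: "x \<in> ext G H g" "y = \<psi> x" by blast
      obtain h a where "h \<in> H" "x = h \<otimes> g [^] (a::int)" using x(1) by (rule ext_memE)
      then show "y \<in> ext G H' g'" using x psi ph(1) by (simp add: ext_memI)
    next
      fix y assume "y \<in> ext G H' g'"
      then obtain h' a where h': "h' \<in> H'" "y = h' \<otimes> g' [^] (a::int)" by (rule ext_memE)
      then obtain h where h: "h \<in> H" "h' = \<phi> h" using ph(4) by blast
      then have "y = \<psi> (h \<otimes> g [^] a)" using h' psi by simp
      then show "y \<in> \<psi> ` ext G H g" using h by (simp add: ext_memI)
    qed
  next
    show "inj_on \<psi> (carrier (G\<lparr>carrier := ext G H g\<rparr>))"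
    proof (simp, rule inj_onI)
      fix x y assume "x \<in> ext G H g" "y \<in> ext G H g" and eq: "\<psi> x = \<psi> y"
      obtain h1 a1 where x: "h1 \<in> H" "x = h1 \<otimes> g [^] (a1::int)" using \<open>x \<in> ext G H g\<close> by (rule ext_memE)
      obtain h2 a2 where y: "h2 \<in> H" "y = h2 \<otimes> g [^] (a2::int)" using \<open>y \<in> ext G H g\<close> by (rule ext_memE)
      have "\<phi> h1 \<otimes> g' [^] a1 = \<phi> h2 \<otimes> g' [^] a2" using eq x y psi by simp
      then have "a1 = a2 \<and> \<phi> h1 = \<phi> h2" using uniq_decomp[OF H' g' ind'] ph(1) x y by blast
      then have "a1 = a2 \<and> h1 = h2" using ph(3) x y by (auto dest: inj_onD)
      then show "x = y" using x y by simp
    qed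
  qed
  moreover have "\<forall>h\<in>H. \<psi> h = \<phi> h"
  proof
    fix h assume h: "h \<in> H"
    then have "\<psi> (h \<otimes> g [^] (0::int)) = \<phi> h \<otimes> g' [^] (0::int)" by (rule psi)
    then show "\<psi> h = \<phi> h" using h ph(1) g g' by simp
  qed
  ultimately show ?thesis by blast
qed

lemma chain_iso:
  "chain G C n B \<Longrightarrow> chain G C n B' \<Longrightarrow>
   \<exists>\<phi>. \<phi> \<in> iso (G\<lparr>carrier := B\<rparr>) (G\<lparr>carrier := B'\<rparr>) \<and> (\<forall>c\<in>C. \<phi> c = c)"
proof (induction arbitrary: B' rule: chain.induct)
  case base
  from base.prems have "B' = C" by (cases rule: chain.cases) auto
  then show ?case by (intro exI[of _ "\<lambda>x. x"]) (simp add: iso_set_refl)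
next
  case (step n H g)
  from step.prems obtain H' g' where B': "B' = ext G H' g'" "chain G C n H'" "g' \<in> carrier G" "indep G H' g'"
    by (cases rule: chain.cases) auto
  obtain \<phi> where phi: "\<phi> \<in> iso (G\<lparr>carrier := H\<rparr>) (G\<lparr>carrier := H'\<rparr>)" "\<forall>c\<in>C. \<phi> c = c"
    using step.IH B'(2) by blast
  have HC: "subgroup H G" "C \<subseteq> H" using chain_sub[OF step.hyps(1)] by auto
  have H'C: "subgroup H' G" using chain_sub[OF B'(2)] by auto
  obtain \<psi> where "\<psi> \<in> iso (G\<lparr>carrier := ext G H g\<rparr>) (G\<lparr>carrier := ext G H' g'\<rparr>)" "\<forall>h\<in>H. \<psi> h = \<phi> h"
    using ext_iso[OF HC(1) H'C step.hyps(2) B'(3) step.hyps(3) B'(4) phi(1)] by blast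
  then show ?case using phi(2) HC(2) B'(1) by (intro exI[of _ \<psi>]) auto
qed

end


context comm_group
begin

lemma pow_comm_int: "x \<in> carrier G \<Longrightarrow> (x [^] (a::int)) [^] (b::int) = (x [^] b) [^] a"
  by (simp add: int_pow_pow mult.commute)

lemma rank1:
  assumes D: "subgroup D G" and B: "subgroup B G" and DB: "D \<subseteq> B"
    and satD: "\<forall>x\<in>B. \<forall>m::nat. m > 0 \<longrightarrow> x [^] m \<in> D \<longrightarrow> x \<in> D"
    and bs: "set bs \<subseteq> B" and Beq: "B = lin G {\<one>} bs"
    and g: "g \<in> B"
    and hyp: "\<forall>x\<in>B. \<exists>m::nat. m > 0 \<and> (\<exists>d\<in>D. \<exists>a::int. x [^] m = d \<otimes> g [^] a)"
  shows "B = D \<or> (\<exists>f\<in>B. indep G D f \<and> B = ext G D f)"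
proof -
  interpret D: subgroup D G by fact
  interpret B: subgroup B G by fact
  have gc: "g \<in> carrier G" using g by auto
  have satI: "x \<in> D" if "x \<in> B" "M > 0" "x [^] (M::int) \<in> D" for x M
  proof -
    have "x [^] (nat M) \<in> D" using that by (metis int_pow_int int_nat_eq less_le)
    moreover have "nat M > 0" using that by simp
    ultimately show ?thesis using satD that(1) by blast
  qed
  show ?thesis
  proof (cases "indep G D g")
    case False
    then obtain a :: int where a: "a \<noteq> 0" "g [^] a \<in> D" by (auto simp: indep_def)
    have "g [^] \<bar>a\<bar> \<in> D"
    proof (cases "a > 0")
      case True then show ?thesis using a by simp
    next
      case False
      then have "\<bar>a\<bar> = - a" by simp
      then show ?thesis using a gc by (simp add: int_pow_neg)
    qed
    moreover have "\<bar>a\<bar> > 0" using a by simp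
    ultimately have gD: "g \<in> D" using satI[OF g] by blast
    have "B \<subseteq> D"
    proof
      fix x assume x: "x \<in> B"
      then obtain m :: nat and d a where m: "m > 0" "d \<in> D" "x [^] m = d \<otimes> g [^] (a::int)"
        using hyp by blast
      have "x [^] m \<in> D" using m gD by (simp add: subgroup_int_pow_closed[OF D])
      then show "x \<in> D" using satD x m by blast
    qed
    then show ?thesis using DB by blast
  next
    case True
    define Q where "Q M x \<longleftrightarrow> (\<exists>d\<in>D. \<exists>a::int. x [^] (M::int) = d \<otimes> g [^] a)" for M x
    have Qmul: "Q (M * k) x" if Qx: "Q M x" and xc: "x \<in> carrier G" for M k x
    proof -
      obtain d and a :: int where d: "d \<in> D" "x [^] M = d \<otimes> g [^] a" using Qx unfolding Q_def by blast
      have "x [^] (M * k) = (x [^] M) [^] k" using xc by (simp add: int_pow_pow)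
      also have "\<dots> = d [^] k \<otimes> g [^] (a * k)" using d gc by (simp add: pow_prod)
      finally have "x [^] (M * k) = d [^] k \<otimes> g [^] (a * k)" .
      moreover have "d [^] k \<in> D" using d(1) by (rule subgroup_int_pow_closed[OF D])
      ultimately show ?thesis unfolding Q_def by blast
    qed
    have Qsub: "subgroup {x \<in> carrier G. Q M x} G" for M
    proof
      show "{x \<in> carrier G. Q M x} \<subseteq> carrier G" by auto
      have "\<one> [^] M = \<one> \<otimes> g [^] (0::int)" using gc by simp
      then have "Q M \<one>" unfolding Q_def using D.one_closed by blast
      then show "\<one> \<in> {x \<in> carrier G. Q M x}" by simp
    next
      fix x y assume "x \<in> {x \<in> carrier G. Q M x}" "y \<in> {x \<in> carrier G. Q M x}"
      then obtain d1 a1 d2 a2 where x: "x \<in> carrier G" "d1 \<in> D" "x [^] M = d1 \<otimes> g [^] (a1::int)"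
        and y: "y \<in> carrier G" "d2 \<in> D" "y [^] M = d2 \<otimes> g [^] (a2::int)" unfolding Q_def by blast
      have "(x \<otimes> y) [^] M = (d1 \<otimes> d2) \<otimes> g [^] (a1 + a2)"
        using x y gc by (simp add: int_pow_distrib int_pow_mult m_ac)
      then show "x \<otimes> y \<in> {x \<in> carrier G. Q M x}" using x y by (auto simp: Q_def)
    next
      fix x assume "x \<in> {x \<in> carrier G. Q M x}"
      then obtain d1 a1 where x: "x \<in> carrier G" "d1 \<in> D" "x [^] M = d1 \<otimes> g [^] (a1::int)"
        unfolding Q_def by blast
      have "(inv x) [^] M = inv d1 \<otimes> g [^] (- a1)"
        using x gc by (simp add: int_pow_inv inv_mult int_pow_neg)
      then show "inv x \<in> {x \<in> carrier G. Q M x}" using x by (auto simp: Q_def)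
    qed
    have "\<exists>M>0. \<forall>b\<in>set cs. Q M b" if "set cs \<subseteq> B" for cs
      using that
    proof (induction cs)
      case Nil show ?case by (intro exI[of _ 1]) auto
    next
      case (Cons b cs)
      obtain M1 where M1: "M1 > 0" "\<forall>b\<in>set cs. Q M1 b" using Cons by auto
      obtain m :: nat and d a where m: "m > 0" "d \<in> D" "b [^] m = d \<otimes> g [^] (a::int)"
        using hyp Cons.prems by auto
      have "Q (int m) b" using m by (auto simp: Q_def int_pow_int)
      then have "Q (int m * M1) b" using Cons.prems by (intro Qmul) auto
      moreover have "Q (M1 * int m) c" if "c \<in> set cs" for c
        using M1 that Cons.prems by (intro Qmul) auto
      ultimately show ?case using M1 m by (intro exI[of _ "M1 * int m"]) (auto simp: mult.commute)
    qed
    then obtain M where M: "M > 0" "\<forall>b\<in>set bs. Q M b" using bs by blast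
    have QB: "\<forall>x\<in>B. Q M x"
    proof -
      have "lin G {\<one>} bs \<subseteq> {x \<in> carrier G. Q M x}"
      proof (rule lin_le[OF Qsub])
        show "{\<one>} \<subseteq> {x \<in> carrier G. Q M x}" using subgroup.one_closed[OF Qsub[of M]] by blast
        show "set bs \<subseteq> {x \<in> carrier G. Q M x}" using M(2) bs B.subset by blast
      qed
      then show ?thesis using Beq by auto
    qed
    define I where "I = {a. \<exists>x\<in>B. \<exists>d\<in>D. x [^] M = d \<otimes> g [^] (a::int)}"
    have Iiff: "a \<in> I \<longleftrightarrow> (\<exists>x\<in>B. \<exists>d\<in>D. x [^] M = d \<otimes> g [^] a)" for a by (simp add: I_def)
    have addI: "a + b \<in> I" if aI: "a \<in> I" and bI: "b \<in> I" for a b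
    proof -
      obtain x1 d1 where 1: "x1 \<in> B" "d1 \<in> D" "x1 [^] M = d1 \<otimes> g [^] a" using Iiff[THEN iffD1, OF aI] by blast
      obtain x2 d2 where 2: "x2 \<in> B" "d2 \<in> D" "x2 [^] M = d2 \<otimes> g [^] b" using Iiff[THEN iffD1, OF bI] by blast
      have "(x1 \<otimes> x2) [^] M = (d1 \<otimes> d2) \<otimes> g [^] (a + b)"
        using 1 2 gc by (simp add: int_pow_distrib int_pow_mult m_ac)
      then show ?thesis using 1 2 by (auto simp: I_def)
    qed
    have mulI: "z * a \<in> I" if aI: "a \<in> I" for a z
    proof -
      obtain x1 d1 where 1: "x1 \<in> B" "d1 \<in> D" "x1 [^] M = d1 \<otimes> g [^] a" using Iiff[THEN iffD1, OF aI] by blast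
      have "(x1 [^] z) [^] M = (x1 [^] M) [^] z" using 1 by (simp add: pow_comm_int)
      also have "\<dots> = d1 [^] z \<otimes> g [^] (z * a)" using 1 gc by (simp add: pow_prod mult.commute)
      finally have "(x1 [^] z) [^] M = d1 [^] z \<otimes> g [^] (z * a)" .
      moreover have "x1 [^] z \<in> B" "d1 [^] z \<in> D" using 1 by (simp_all add: subgroup_int_pow_closed[OF D] subgroup_int_pow_closed[OF B])
      ultimately show ?thesis unfolding Iiff by blast
    qed
    have "g [^] M = \<one> \<otimes> g [^] M" using gc by simp
    then have MI: "M \<in> I" unfolding Iiff using g D.one_closed by blast
    obtain d0 where d0: "d0 > 0" "d0 \<in> I" "\<forall>a\<in>I. \<exists>q. a = q * d0"
      using int_ideal[OF addI mulI MI] M by auto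
    obtain f df where f: "f \<in> B" "df \<in> D" "f [^] M = df \<otimes> g [^] d0" using Iiff[THEN iffD1, OF d0(2)] by blast
    have fc: "f \<in> carrier G" "df \<in> carrier G" using f by auto
    have "B \<subseteq> ext G D f"
    proof
      fix x assume x: "x \<in> B"
      then obtain dx a where dx: "dx \<in> D" "x [^] M = dx \<otimes> g [^] (a::int)" using QB Q_def by blast
      then have "a \<in> I" using x by (auto simp: I_def)
      then obtain q where q: "a = q * d0" using d0 by blast
      have xc: "x \<in> carrier G" "dx \<in> carrier G" using x dx by auto
      have "(x \<otimes> f [^] (- q)) [^] M = x [^] M \<otimes> (f [^] M) [^] (- q)"
        using xc fc by (simp add: int_pow_distrib pow_comm_int)
      also have "\<dots> = (dx \<otimes> df [^] (- q)) \<otimes> (g [^] (q * d0) \<otimes> g [^] (- (q * d0)))"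
        using xc fc gc by (simp add: dx q f pow_prod m_ac mult.commute)
      also have "g [^] (q * d0) \<otimes> g [^] (- (q * d0)) = \<one>" using gc by (simp add: int_pow_mult[symmetric])
      finally have "(x \<otimes> f [^] (- q)) [^] M \<in> D"
        using dx f xc fc by (simp add: subgroup_int_pow_closed[OF D])
      moreover have "x \<otimes> f [^] (- q) \<in> B" using x f by (simp add: subgroup_int_pow_closed[OF B])
      ultimately have x': "x \<otimes> f [^] (- q) \<in> D" using satI M by blast
      have "x = (x \<otimes> f [^] (- q)) \<otimes> f [^] q" using xc fc by (simp add: m_assoc int_pow_neg)
      then show "x \<in> ext G D f" using x' by (metis ext_memI)
    qed
    moreover have "ext G D f \<subseteq> B" by (rule ext_le[OF B DB f(1)])
    moreover have "indep G D f"
      unfolding indep_def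
    proof (intro allI impI)
      fix m :: int assume fm: "f [^] m \<in> D"
      have "(f [^] m) [^] M = df [^] m \<otimes> g [^] (d0 * m)"
        using fc gc by (simp add: pow_comm_int f pow_prod)
      then have "g [^] (d0 * m) = inv (df [^] m) \<otimes> (f [^] m) [^] M"
        using fc gc by (simp add: m_assoc[symmetric])
      also have "\<dots> \<in> D" using fm f by (simp add: subgroup_int_pow_closed[OF D])
      finally have "d0 * m = 0" using True by (auto simp: indep_def)
      then show "m = 0" using d0 by simp
    qed
    ultimately show ?thesis using f by blast
  qed
qed

end


context comm_group
begin

lemma split_chain:
  assumes gs0: "set gs0 \<subseteq> carrier G" "carrier G \<subseteq> lin G {\<one>} gs0"
  shows "subgroup C G \<Longrightarrow> subgroup B G \<Longrightarrow> C \<subseteq> B \<Longrightarrow>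
    (\<forall>x\<in>B. \<forall>m::nat. m > 0 \<longrightarrow> x [^] m \<in> C \<longrightarrow> x \<in> C) \<Longrightarrow> set gs \<subseteq> B \<Longrightarrow>
    (\<forall>x\<in>B. \<exists>m::nat. m > 0 \<and> x [^] m \<in> lin G C gs) \<Longrightarrow> \<exists>k\<le>length gs. chain G C k B"
proof (induction gs arbitrary: B)
  case Nil
  have "B \<subseteq> C"
  proof
    fix x assume x: "x \<in> B"
    then obtain m :: nat where "m > 0" "x [^] m \<in> C" using Nil.prems(6) by auto
    then show "x \<in> C" using Nil.prems(4) x by blast
  qed
  then have "B = C" using Nil.prems(3) by blast
  then show ?case using chain.base[OF Nil.prems(1)] by auto
next
  case (Cons g hs)
  note C = Cons.prems(1) and B = Cons.prems(2)
  interpret B: subgroup B G by fact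
  interpret C: subgroup C G by fact
  have hsB: "set hs \<subseteq> B" and gB: "g \<in> B" using Cons.prems(5) by auto
  have hsc: "set hs \<subseteq> carrier G" using hsB B.subset by blast
  define K where "K = lin G C hs"
  have K: "subgroup K G" unfolding K_def by (rule lin_subgroup[OF C hsc])
  have KB: "K \<subseteq> B" unfolding K_def by (rule lin_le[OF B Cons.prems(3) hsB])
  have CK: "C \<subseteq> K" unfolding K_def by (rule lin_sub[OF C hsc])
  have hsK: "set hs \<subseteq> K" unfolding K_def by (rule lin_gens[OF C hsc])
  define D where "D = sat G B K"
  have D: "subgroup D G" unfolding D_def by (rule sat_subgroup[OF B K])
  have DB: "D \<subseteq> B" by (auto simp: D_def sat_def)
  have inD: "y \<in> D" if "y \<in> K" for y
  proof -
    have "y \<in> B" "y [^] (1::nat) \<in> K" using that KB by auto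
    then show ?thesis unfolding D_def sat_def by (auto intro!: exI[of _ "1::nat"])
  qed
  have CD: "C \<subseteq> D" using CK inD by blast
  have "\<exists>k\<le>length hs. chain G C k D"
  proof (rule Cons.IH[OF C D CD])
    show "\<forall>x\<in>D. \<forall>m::nat. m > 0 \<longrightarrow> x [^] m \<in> C \<longrightarrow> x \<in> C" using Cons.prems(4) DB by blast
    show "set hs \<subseteq> D" using hsK inD by blast
    show "\<forall>x\<in>D. \<exists>m::nat. m > 0 \<and> x [^] m \<in> lin G C hs" by (auto simp: D_def sat_def K_def)
  qed
  then obtain k where k: "k \<le> length hs" "chain G C k D" by blast
  have satD: "\<forall>x\<in>B. \<forall>m::nat. m > 0 \<longrightarrow> x [^] m \<in> D \<longrightarrow> x \<in> D"
    using sat_saturated[OF K _ _ _ B.subset] unfolding D_def by blast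
  obtain bs where bs: "set bs \<subseteq> B" "B = lin G {\<one>} bs"
    using fg_sub[OF gs0(1) B] gs0(2) B.subset by blast
  have hyp: "\<forall>x\<in>B. \<exists>m::nat. m > 0 \<and> (\<exists>d\<in>D. \<exists>a::int. x [^] m = d \<otimes> g [^] a)"
  proof
    fix x assume "x \<in> B"
    then obtain m :: nat where m: "m > 0" "x [^] m \<in> ext G K g" using Cons.prems(6) K_def by auto
    then obtain y and a :: int where y: "y \<in> K" "x [^] m = y \<otimes> g [^] a" by (blast elim: ext_memE)
    then show "\<exists>m::nat. m > 0 \<and> (\<exists>d\<in>D. \<exists>a::int. x [^] m = d \<otimes> g [^] a)" using m inD by blast
  qed
  have "B = D \<or> (\<exists>f\<in>B. indep G D f \<and> B = ext G D f)"
    by (rule rank1[OF D B DB satD bs gB hyp])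
  then show ?case
  proof
    assume "B = D" then show ?thesis using k by (intro exI[of _ k]) auto
  next
    assume "\<exists>f\<in>B. indep G D f \<and> B = ext G D f"
    then obtain f where f: "f \<in> B" "indep G D f" "B = ext G D f" by blast
    have "chain G C (Suc k) B" using chain.step[OF k(2) _ f(2)] f B.subset by auto
    then show ?thesis using k by (intro exI[of _ "Suc k"]) auto
  qed
qed

end

theorem lemma2p3:
  fixes P :: "('a, 'b) monoid_scheme" and A :: "'a set"
  assumes "comm_group P" and "fin_gen_group P" and "subgroup A P"
  shows "finite (intermediate_subgroups P A // rel_equiv_rel P A)"
proof -
  interpret P: comm_group P by fact
  note Asub = assms(3)
  interpret A: subgroup A P by fact
  obtain S where S: "finite S" "S \<subseteq> carrier P" "generate P S = carrier P"
    using assms(2) unfolding fin_gen_group_def by blast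
  obtain gs0 where gs0s: "set gs0 = S" using finite_list[OF S(1)] by blast
  have gs0: "set gs0 \<subseteq> carrier P" using gs0s S by simp
  have L0: "subgroup (lin P {\<one>\<^bsub>P\<^esub>} gs0) P" by (rule P.lin_subgroup[OF P.triv_subgroup gs0])
  have cP: "carrier P \<subseteq> lin P {\<one>\<^bsub>P\<^esub>} gs0"
    using P.generate_subgroup_incl[OF _ L0] P.lin_gens[OF P.triv_subgroup gs0] gs0s S(3) by blast
  define A' where "A' = sat P (carrier P) A"
  have A': "subgroup A' P" unfolding A'_def by (rule P.sat_subgroup[OF P.subgroup_self Asub])
  have AA': "A \<subseteq> A'"
  proof
    fix a assume "a \<in> A"
    then show "a \<in> A'" unfolding A'_def sat_def by (auto intro!: exI[of _ "1::nat"])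
  qed
  obtain hs where hs: "set hs \<subseteq> A'" "A' = lin P {\<one>\<^bsub>P\<^esub>} hs"
    using P.fg_sub[OF gs0 A'] cP subgroup.subset[OF A'] by blast
  have hsc: "set hs \<subseteq> carrier P" using hs subgroup.subset[OF A'] by blast
  have A'eq: "A' = lin P A hs"
  proof
    show "A' \<subseteq> lin P A hs" using hs(2) P.lin_mono[of "{\<one>\<^bsub>P\<^esub>}" A hs] by auto
    show "lin P A hs \<subseteq> A'" by (rule P.lin_le[OF A' AA' hs(1)])
  qed
  have "\<forall>h\<in>set hs. \<exists>m::nat. m > 0 \<and> h [^]\<^bsub>P\<^esub> m \<in> A" using hs(1) by (auto simp: A'_def sat_def)
  then obtain R where R: "finite R" "R \<subseteq> carrier P" "\<forall>x\<in>A'. \<exists>r\<in>R. \<exists>a\<in>A. x = a \<otimes>\<^bsub>P\<^esub> r"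
    using P.tors_fin[OF Asub hsc] A'eq by auto
  define Cs where "Cs = {C. subgroup C P \<and> A \<subseteq> C \<and> C \<subseteq> A'}"
  have incl: "C1 \<subseteq> C2" if C1: "C1 \<in> Cs" and C2: "C2 \<in> Cs" and eq: "C1 \<inter> R = C2 \<inter> R" for C1 C2
  proof
    fix x assume x: "x \<in> C1"
    have "x \<in> A'" using C1 x by (auto simp: Cs_def)
    then obtain r a where ra: "r \<in> R" "a \<in> A" "x = a \<otimes>\<^bsub>P\<^esub> r" using R(3) by blast
    have rc: "r \<in> carrier P" "a \<in> carrier P" using R(2) ra by auto
    have "r = inv\<^bsub>P\<^esub> a \<otimes>\<^bsub>P\<^esub> x" using ra rc by (simp add: P.m_assoc[symmetric])
    moreover have "inv\<^bsub>P\<^esub> a \<in> C1" using C1 ra by (auto simp: Cs_def intro: subgroup.m_inv_closed)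
    ultimately have "r \<in> C1" using C1 x by (auto simp: Cs_def intro: subgroup.m_closed)
    then have "r \<in> C2" using eq ra by blast
    moreover have "a \<in> C2" using C2 ra by (auto simp: Cs_def)
    ultimately show "x \<in> C2" using C2 ra by (auto simp: Cs_def intro: subgroup.m_closed)
  qed
  have finCs: "finite Cs"
  proof (rule finite_imageD[of "\<lambda>C. C \<inter> R"])
    show "finite ((\<lambda>C. C \<inter> R) ` Cs)" by (rule finite_subset[of _ "Pow R"]) (use R(1) in auto)
    show "inj_on (\<lambda>C. C \<inter> R) Cs" by (rule inj_onI) (use incl in blast)
  qed
  define XX where "XX = intermediate_subgroups P A"
  define r where "r = rel_equiv_rel P A"
  define Cof where "Cof B = sat P B A" for B
  define kof where "kof B = (LEAST k. chain P (Cof B) k B)" for B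
  have key: "Cof B \<in> Cs \<and> chain P (Cof B) (kof B) B \<and> kof B \<le> length gs0" if B: "B \<in> XX" for B
  proof -
    have Bs: "subgroup B P" "A \<subseteq> B" using B by (auto simp: XX_def intermediate_subgroups_def)
    have C: "subgroup (Cof B) P" unfolding Cof_def by (rule P.sat_subgroup[OF Bs(1) Asub])
    have AC: "A \<subseteq> Cof B"
    proof
      fix a assume "a \<in> A" then show "a \<in> Cof B" using Bs unfolding Cof_def sat_def by (auto intro!: exI[of _ "1::nat"])
    qed
    have CB: "Cof B \<subseteq> B" by (auto simp: Cof_def sat_def)
    have CA': "Cof B \<subseteq> A'" using subgroup.subset[OF Bs(1)] by (auto simp: Cof_def A'_def sat_def)
    obtain bs where bs: "set bs \<subseteq> B" "length bs \<le> length gs0" "B = lin P {\<one>\<^bsub>P\<^esub>} bs"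
      using P.fg_sub[OF gs0 Bs(1)] cP subgroup.subset[OF Bs(1)] by blast
    have "\<exists>k\<le>length bs. chain P (Cof B) k B"
    proof (rule P.split_chain[OF gs0 cP C Bs(1) CB _ bs(1)])
      show "\<forall>x\<in>B. \<forall>m::nat. m > 0 \<longrightarrow> x [^]\<^bsub>P\<^esub> m \<in> Cof B \<longrightarrow> x \<in> Cof B"
        unfolding Cof_def using P.sat_saturated[OF Asub _ _ _ subgroup.subset[OF Bs(1)]] by blast
      have "lin P {\<one>\<^bsub>P\<^esub>} bs \<subseteq> lin P (Cof B) bs"
        by (rule P.lin_mono) (use subgroup.one_closed[OF C] in auto)
      then have inl: "x \<in> lin P (Cof B) bs" if "x \<in> B" for x using bs(3) that by auto
      show "\<forall>x\<in>B. \<exists>m::nat. m > 0 \<and> x [^]\<^bsub>P\<^esub> m \<in> lin P (Cof B) bs"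
      proof
        fix x assume x: "x \<in> B"
        then have "x [^]\<^bsub>P\<^esub> (1::nat) = x" using subgroup.subset[OF Bs(1)] by auto
        then show "\<exists>m::nat. m > 0 \<and> x [^]\<^bsub>P\<^esub> m \<in> lin P (Cof B) bs"
          using inl[OF x] by (intro exI[of _ "1::nat"]) simp
      qed
    qed
    then obtain k where k: "k \<le> length bs" "chain P (Cof B) k B" by blast
    have "chain P (Cof B) (kof B) B" unfolding kof_def using k(2) by (rule LeastI)
    moreover have "kof B \<le> k" unfolding kof_def using k(2) by (rule Least_le)
    ultimately show ?thesis using C AC CA' k bs(2) by (auto simp: Cs_def)
  qed
  have rimg: "r `` {B} = {B''. B'' \<in> XX \<and> rel_equiv P A B B''}" if "B \<in> XX" for B
    using that by (auto simp: r_def rel_equiv_rel_def XX_def)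
  have eqv: "r `` {B1} \<subseteq> r `` {B2}"
    if B1: "B1 \<in> XX" and B2: "B2 \<in> XX" and eq: "Cof B1 = Cof B2" "kof B1 = kof B2" for B1 B2
  proof
    fix B'' assume "B'' \<in> r `` {B1}"
    then have B'': "B'' \<in> XX" "rel_equiv P A B1 B''" using rimg[OF B1] by auto
    then obtain f where f: "f \<in> iso (P\<lparr>carrier := B1\<rparr>) (P\<lparr>carrier := B''\<rparr>)" "\<forall>a\<in>A. f a = a"
      unfolding rel_equiv_def by blast
    obtain \<phi> where phi: "\<phi> \<in> iso (P\<lparr>carrier := B2\<rparr>) (P\<lparr>carrier := B1\<rparr>)" "\<forall>c\<in>Cof B2. \<phi> c = c"
      using P.chain_iso[of "Cof B2" "kof B2" B2 B1] key[OF B1] key[OF B2] eq by auto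
    have "f \<circ> \<phi> \<in> iso (P\<lparr>carrier := B2\<rparr>) (P\<lparr>carrier := B''\<rparr>)" by (rule iso_set_trans[OF phi(1) f(1)])
    moreover have "\<forall>a\<in>A. (f \<circ> \<phi>) a = a" using phi(2) f(2) key[OF B2] by (auto simp: Cs_def)
    ultimately have "rel_equiv P A B2 B''" unfolding rel_equiv_def by blast
    then show "B'' \<in> r `` {B2}" using rimg[OF B2] B'' by auto
  qed
  define pick where "pick p = (SOME B. B \<in> XX \<and> (Cof B, kof B) = p)" for p
  have "XX // r \<subseteq> (\<lambda>p. r `` {pick p}) ` (Cs \<times> {..length gs0})"
  proof
    fix Q assume "Q \<in> XX // r"
    then obtain B where B: "B \<in> XX" "Q = r `` {B}" unfolding quotient_def by blast
    define p where "p = (Cof B, kof B)"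
    have p: "p \<in> Cs \<times> {..length gs0}" using key[OF B(1)] by (auto simp: p_def)
    have "pick p \<in> XX \<and> (Cof (pick p), kof (pick p)) = p"
      unfolding pick_def by (rule someI[of _ B]) (use B p_def in auto)
    then have "r `` {pick p} = r `` {B}" using eqv B(1) p_def by (metis Pair_inject subset_antisym)
    then show "Q \<in> (\<lambda>p. r `` {pick p}) ` (Cs \<times> {..length gs0})" using p B by auto
  qed
  moreover have "finite ((\<lambda>p. r `` {pick p}) ` (Cs \<times> {..length gs0}))" using finCs by simp
  ultimately show ?thesis unfolding XX_def r_def by (rule finite_subset)
qed


end
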